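(* Let $H$ be a $3$-uniform hypergraph on $7$ vertices not containing a Fano plane. If some vertex $v$ of $H$ satisfies $d(v)\ge 11$ and $e(H\setminus v)\ge 18$, then $H\setminus v$ is isomorphic to $B_6$.
   Context: $d(v)$ is the number of edges of $H$ containing $v$; $H\setminus v$ is the hypergraph obtained by deleting $v$ and all edges containing it; $e(\cdot)$ denotes the number of edges. "Containing" means having a (not necessarily induced) subhypergraph isomorphic to it. The Fano plane is the hypergraph on vertex set $\{1,\dots,7\}$ with edges $123,345,156,147,367,257,246$. $B_6$ is the hypergraph on $6$ vertices with a partition into two disjoint sets $X,Y$ of size $3$ each whose edges are exactly the triples meeting both $X$ and $Y$. *)

theory Defs
  imports Main
begin

definition uniform3 :: "'a set \<Rightarrow> 'a set set \<Rightarrow> bool" where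
  "uniform3 V E \<longleftrightarrow> finite V \<and> (\<forall>e\<in>E. e \<subseteq> V \<and> card e = 3)"

definition contains_hg :: "'a set \<Rightarrow> 'a set set \<Rightarrow> 'b set \<Rightarrow> 'b set set \<Rightarrow> bool" where
  "contains_hg V E W F \<longleftrightarrow> (\<exists>f. inj_on f W \<and> f ` W \<subseteq> V \<and> (\<forall>e\<in>F. f ` e \<in> E))"

definition iso_hg :: "'a set \<Rightarrow> 'a set set \<Rightarrow> 'b set \<Rightarrow> 'b set set \<Rightarrow> bool" where
  "iso_hg V E W F \<longleftrightarrow> (\<exists>f. bij_betw f V W \<and> (\<lambda>e. f ` e) ` E = F)"

definition degree_hg :: "'a set set \<Rightarrow> 'a \<Rightarrow> nat" where
  "degree_hg E v = card {e\<in>E. v \<in> e}"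

definition del_vertex_V :: "'a set \<Rightarrow> 'a \<Rightarrow> 'a set" where
  "del_vertex_V V v = V - {v}"

definition del_vertex_E :: "'a set set \<Rightarrow> 'a \<Rightarrow> 'a set set" where
  "del_vertex_E E v = {e\<in>E. v \<notin> e}"

definition fano_V :: "nat set" where
  "fano_V = {1..7}"

definition fano_E :: "nat set set" where
  "fano_E = {{1,2,3},{3,4,5},{1,5,6},{1,4,7},{3,6,7},{2,5,7},{2,4,6}}"

definition B6_V :: "nat set" where
  "B6_V = {0..5}"

definition B6_E :: "nat set set" where
  "B6_E = {e. e \<subseteq> B6_V \<and> card e = 3 \<and> e \<inter> {0,1,2} \<noteq> {} \<and> e \<inter> {3,4,5} \<noteq> {}}"

end

theory Submission
  imports Defs
begin


definition mlist :: "(nat\<times>nat\<times>nat\<times>nat\<times>nat\<times>nat) list" where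
"mlist = [(0,1,2,3,4,5),(0,1,2,4,3,5),(0,1,2,5,3,4),(0,2,1,3,4,5),(0,2,1,4,3,5),(0,2,1,5,3,4),
 (0,3,1,2,4,5),(0,3,1,4,2,5),(0,3,1,5,2,4),(0,4,1,2,3,5),(0,4,1,3,2,5),(0,4,1,5,2,3),
 (0,5,1,2,3,4),(0,5,1,3,2,4),(0,5,1,4,2,3)]"

definition pr :: "nat \<Rightarrow> nat set set" where
"pr i = (case mlist ! i of (a,a',b,b',c,c') \<Rightarrow> {{a,a'},{b,b'},{c,c'}})"
definition Pl :: "nat set list" where
"Pl = [{0,1},{0,2},{0,3},{0,4},{0,5},{1,2},{1,3},{1,4},{1,5},{2,3},{2,4},{2,5},{3,4},{3,5},{4,5}]"
definition Tl :: "nat set list" where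
"Tl = [{0,1,2},{0,1,3},{0,1,4},{0,1,5},{0,2,3},{0,2,4},{0,2,5},{0,3,4},{0,3,5},{0,4,5},
 {1,2,3},{1,2,4},{1,2,5},{1,3,4},{1,3,5},{1,4,5},{2,3,4},{2,3,5},{2,4,5},{3,4,5}]"

definition C1 :: "nat list list" where "C1 = [[11,14,6,7],[10,15,6,7],[10,15,5,8],[11,17,3,7],[10,18,3,7],[10,18,2,8],[13,17,3,5],[10,19,3,5],[10,19,2,6],[13,18,3,4],[11,19,3,4],[11,19,1,6],[14,18,2,4],[12,19,2,4],[12,19,1,5]]"
definition C2 :: "nat list list" where "C2 = [[5,8,12,13],[4,9,12,13],[4,9,11,14],[2,8,12,16],[1,9,12,16],[1,9,11,17],[2,6,14,16],[0,9,14,16],[0,9,13,17],[1,6,15,16],[0,8,15,16],[0,8,13,18],[1,5,15,17],[0,7,15,17],[0,7,14,18]]"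
definition disjl :: "(nat\<times>nat) list" where "disjl = [(0,19),(1,18),(2,17),(3,16),(4,15),(5,14),(6,13),(7,12),(8,11),(9,10),(10,9),(11,8),(12,7),(13,6),(14,5),(15,4),(16,3),(17,2),(18,1),(19,0)]"

definition CL :: "(nat list \<times> nat list) list" where "CL = [([11,14,6,7],[5,8,12,13]),([10,15,6,7],[4,9,12,13]),([10,15,5,8],[4,9,11,14]),([11,17,3,7],[2,8,12,16]),([10,18,3,7],[1,9,12,16]),([10,18,2,8],[1,9,11,17]),([13,17,3,5],[2,6,14,16]),([10,19,3,5],[0,9,14,16]),([10,19,2,6],[0,9,13,17]),([13,18,3,4],[1,6,15,16]),([11,19,3,4],[0,8,15,16]),([11,19,1,6],[0,8,13,18]),([14,18,2,4],[1,5,15,17]),([12,19,2,4],[0,7,15,17]),([12,19,1,5],[0,7,14,18])]"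
definition cnt :: "nat \<Rightarrow> nat \<Rightarrow> nat" where "cnt j1 j2 = length (filter (\<lambda>(c1,c2). (j1 \<in> set c1 \<and> j2 \<in> set c2) \<or> (j2 \<in> set c1 \<and> j1 \<in> set c2)) CL)"
definition cl1 :: "nat \<Rightarrow> nat set set" where "cl1 i = (\<lambda>j. Tl!j) ` set (fst (CL!i))"
definition cl2 :: "nat \<Rightarrow> nat set set" where "cl2 i = (\<lambda>j. Tl!j) ` set (snd (CL!i))"

lemma K1: "\<forall>i<15. case mlist!i of (a,a',b,b',c,c') \<Rightarrow> distinct [a,a',b,b',c,c'] \<and> set [a,a',b,b',c,c'] \<subseteq> {0..<6}
  \<and> cl1 i = {{a',b,c},{a',b',c'},{a,b,c'},{a,b',c}} \<and> cl2 i = {{a,b,c},{a,b',c'},{a',b,c'},{a',b',c}}"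
  by code_simp
lemma K2: "\<forall>i<15. pr i \<subseteq> set Pl" by code_simp
lemma K3: "\<forall>p\<in>set Pl. card {i\<in>{0..<15}. p \<in> pr i} \<le> 3" by code_simp
lemma K4: "\<forall>i<15. set (fst (CL!i)) \<inter> set (snd (CL!i)) = {} \<and> (\<forall>j\<in>set (fst (CL!i)) \<union> set (snd (CL!i)). j < 20)" by code_simp
lemma K5: "distinct Tl \<and> length Tl = 20 \<and> length CL = 15 \<and> distinct Pl \<and> length Pl = 15" by code_simp
lemma K6: "\<forall>j<20. Tl!j \<inter> Tl!(19-j) = {}" by code_simp
lemma K7: "\<forall>t\<in>set Tl. t \<subseteq> {0..<6} \<and> card t = 3" by code_simp
lemma K8: "\<forall>t\<in>set Pl. t \<subseteq> {0..<6} \<and> card t = 2" by code_simp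
lemma K9: "(6::nat) choose 3 = 20 \<and> (6::nat) choose 2 = 15" by code_simp
lemma cnt_sym: "cnt j1 j2 = cnt j2 j1"
  unfolding cnt_def by (metis (no_types, lifting) case_prod_unfold)

lemma F2: assumes "j1 < 20" "j2 < 20" "j1 + j2 \<noteq> 19" shows "cnt j1 j2 \<le> 2"
proof -
  have L: "\<forall>x\<in>set (List.product [0..<20] [0..<20]). (\<lambda>(j1,j2). j1 \<le> j2 \<longrightarrow> j1 + j2 = 19 \<or> cnt j1 j2 \<le> 2) x"
  proof -
    have "list_all (\<lambda>(j1,j2). j1 \<le> j2 \<longrightarrow> j1 + j2 = 19 \<or> cnt j1 j2 \<le> 2) (List.product [0..<20] [0..<20])"
      by code_simp
    thus ?thesis by (simp add: list_all_iff)
  qed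
  show ?thesis
  proof (cases "j1 \<le> j2")
    case True
    have "(j1,j2) \<in> set (List.product [0..<20] [0..<20])" using assms by simp
    thus ?thesis using L True assms by fastforce
  next
    case False
    have "(j2,j1) \<in> set (List.product [0..<20] [0..<20])" using assms by simp
    thus ?thesis using L False assms cnt_sym by fastforce
  qed
qed



lemma Tl_nth: "t \<in> set Tl \<Longrightarrow> \<exists>j<20. t = Tl!j"
  using K5 by (metis in_set_conv_nth)

lemma Tl_inj: "j < 20 \<Longrightarrow> k < 20 \<Longrightarrow> Tl!j = Tl!k \<Longrightarrow> j = k"
  using K5 nth_eq_iff_index_eq by metis

lemma cl_sub: "i < 15 \<Longrightarrow> cl1 i \<subseteq> set Tl \<and> cl2 i \<subseteq> set Tl"
  using K4 K5 unfolding cl1_def cl2_def by auto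

lemma cl_disj: "i < 15 \<Longrightarrow> cl1 i \<inter> cl2 i = {}"
proof -
  assume i: "i < 15"
  { fix x assume "x \<in> cl1 i" "x \<in> cl2 i"
    then obtain j k where j: "j \<in> set (fst (CL!i))" "x = Tl!j" and k: "k \<in> set (snd (CL!i))" "x = Tl!k"
      unfolding cl1_def cl2_def by auto
    have K: "set (fst (CL!i)) \<inter> set (snd (CL!i)) = {} \<and> (\<forall>j\<in>set (fst (CL!i)) \<union> set (snd (CL!i)). j < 20)"
      using K4 i by blast
    have "j < 20" "k < 20" using K j(1) k(1) by auto
    hence "j = k" using Tl_inj j k by auto
    hence False using K j(1) k(1) by blast }
  thus ?thesis by blast
qed

lemma FE:
  assumes i: "i < 15" and p: "pr i \<subseteq> G" and c: "cl1 i \<subseteq> T \<or> cl2 i \<subseteq> T"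
  shows "\<exists>a a' b b' c c'. distinct [a,a',b,b',c,c'] \<and> set [a,a',b,b',c,c'] \<subseteq> {0..<6} \<and> {a,a'}\<in>G \<and> {b,b'}\<in>G \<and> {c,c'}\<in>G
     \<and> {a',b,c}\<in>T \<and> {a',b',c'}\<in>T \<and> {a,b,c'}\<in>T \<and> {a,b',c}\<in>T"
proof -
  obtain a a' b b' c c' where m: "mlist!i = (a,a',b,b',c,c')" by (metis prod_cases6)
  have K0: "case mlist!i of (a,a',b,b',c,c') \<Rightarrow> distinct [a,a',b,b',c,c'] \<and> set [a,a',b,b',c,c'] \<subseteq> {0..<6}
  \<and> cl1 i = {{a',b,c},{a',b',c'},{a,b,c'},{a,b',c}} \<and> cl2 i = {{a,b,c},{a,b',c'},{a',b,c'},{a',b',c}}"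
    using K1[rule_format, OF i] by this
  have D: "distinct [a,a',b,b',c,c']" and S: "set [a,a',b,b',c,c'] \<subseteq> {0..<6}"
    and C1: "cl1 i = {{a',b,c},{a',b',c'},{a,b,c'},{a,b',c}}" and C2: "cl2 i = {{a,b,c},{a,b',c'},{a',b,c'},{a',b',c}}"
    using K0 unfolding m by simp_all
  have pr: "pr i = {{a,a'},{b,b'},{c,c'}}" unfolding pr_def m by simp
  have P: "{a,a'}\<in>G" "{b,b'}\<in>G" "{c,c'}\<in>G" using p unfolding pr by auto
  show ?thesis
  proof (cases "cl1 i \<subseteq> T")
    case True
    hence "{a',b,c}\<in>T \<and> {a',b',c'}\<in>T \<and> {a,b,c'}\<in>T \<and> {a,b',c}\<in>T" unfolding C1 by simp
    hence "distinct [a,a',b,b',c,c'] \<and> set [a,a',b,b',c,c'] \<subseteq> {0..<6} \<and> {a,a'}\<in>G \<and> {b,b'}\<in>G \<and> {c,c'}\<in>G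
     \<and> {a',b,c}\<in>T \<and> {a',b',c'}\<in>T \<and> {a,b,c'}\<in>T \<and> {a,b',c}\<in>T" using D S P by blast
    thus ?thesis by blast
  next
    case False
    hence "cl2 i \<subseteq> T" using c by blast
    hence "{a,b,c}\<in>T \<and> {a,b',c'}\<in>T \<and> {a',b,c'}\<in>T \<and> {a',b',c}\<in>T" unfolding C2 by simp
    moreover have "{a',a} \<in> G" using P by (simp add: insert_commute)
    moreover have "distinct [a',a,b,b',c,c'] \<and> set [a',a,b,b',c,c'] \<subseteq> {0..<6}" using D S by (auto simp: insert_commute)
    ultimately have "distinct [a',a,b,b',c,c'] \<and> set [a',a,b,b',c,c'] \<subseteq> {0..<6} \<and> {a',a}\<in>G \<and> {b,b'}\<in>G \<and> {c,c'}\<in>G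
     \<and> {a,b,c}\<in>T \<and> {a,b',c'}\<in>T \<and> {a',b,c'}\<in>T \<and> {a',b',c}\<in>T" using P by blast
    thus ?thesis by blast
  qed
qed

lemma core:
  assumes GP: "G \<subseteq> set Pl" and TT: "T \<subseteq> set Tl" and cG: "card (set Pl - G) \<le> 4" and cT: "card (set Tl - T) \<le> 2"
  shows "(\<exists>a a' b b' c c'. distinct [a,a',b,b',c,c'] \<and> set [a,a',b,b',c,c'] \<subseteq> {0..<6} \<and> {a,a'}\<in>G \<and> {b,b'}\<in>G \<and> {c,c'}\<in>G
     \<and> {a',b,c}\<in>T \<and> {a',b',c'}\<in>T \<and> {a,b,c'}\<in>T \<and> {a,b',c}\<in>T)
   \<or> (\<exists>T1 T2. T1 \<in> set Tl \<and> T2 \<in> set Tl \<and> T1 \<inter> T2 = {} \<and> set Tl - T = {T1,T2})"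
proof (rule ccontr)
  assume H: "\<not> ?thesis"
  have bad: "\<not> pr i \<subseteq> G \<or> (\<not> cl1 i \<subseteq> T \<and> \<not> cl2 i \<subseteq> T)" if "i < 15" for i
    using FE[OF that, of G T] H by blast
  define BG where "BG = {i\<in>{0..<15::nat}. \<not> pr i \<subseteq> G}"
  define BT where "BT = {i\<in>{0..<15::nat}. \<not> cl1 i \<subseteq> T \<and> \<not> cl2 i \<subseteq> T}"
  have "BG \<subseteq> (\<Union>p\<in>set Pl - G. {i\<in>{0..<15}. p \<in> pr i})"
    using K2 unfolding BG_def by auto
  hence "card BG \<le> card (\<Union>p\<in>set Pl - G. {i\<in>{0..<15}. p \<in> pr i})"
    by (intro card_mono) auto
  also have "\<dots> \<le> (\<Sum>p\<in>set Pl - G. card {i\<in>{0..<15}. p \<in> pr i})"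
    by (rule card_UN_le) simp
  also have "\<dots> \<le> (\<Sum>p\<in>set Pl - G. 3)"
    using K3 by (intro sum_mono) auto
  also have "\<dots> \<le> 12" using cG by simp
  finally have cBG: "card BG \<le> 12" .
  have "{0..<15} \<subseteq> BG \<union> BT" using bad unfolding BG_def BT_def by auto
  hence "15 \<le> card (BG \<union> BT)" 
  proof -
    have "card {0..<15::nat} \<le> card (BG \<union> BT)" using \<open>{0..<15} \<subseteq> BG \<union> BT\<close>
      by (intro card_mono) (auto simp: BG_def BT_def)
    thus ?thesis by simp
  qed
  also have "\<dots> \<le> card BG + card BT" by (rule card_Un_le)
  finally have cBT: "3 \<le> card BT" using cBG by linarith
  then obtain i0 where i0: "i0 \<in> BT" by fastforce
  hence i0l: "i0 < 15" unfolding BT_def by auto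
  from i0 obtain T1 where T1: "T1 \<in> cl1 i0" "T1 \<notin> T" unfolding BT_def by auto
  from i0 obtain T2 where T2: "T2 \<in> cl2 i0" "T2 \<notin> T" unfolding BT_def by auto
  have T12: "T1 \<in> set Tl" "T2 \<in> set Tl" using T1 T2 cl_sub[OF i0l] by auto
  have "T1 \<noteq> T2" using cl_disj[OF i0l] T1 T2 by auto
  hence "card {T1,T2} = 2" by simp
  moreover have "{T1,T2} \<subseteq> set Tl - T" using T1 T2 T12 by auto
  ultimately have Ms: "set Tl - T = {T1,T2}"
    using cT by (metis card_seteq finite_Diff finite_set)
  have "T1 \<inter> T2 \<noteq> {}" using H Ms T12 by blast
  obtain j1 where j1: "j1 < 20" "T1 = Tl!j1" using Tl_nth T12 by blast
  obtain j2 where j2: "j2 < 20" "T2 = Tl!j2" using Tl_nth T12 by blast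
  have "j1 + j2 \<noteq> 19"
  proof
    assume "j1 + j2 = 19"
    hence "j2 = 19 - j1" by simp
    thus False using K6 j1 j2 \<open>T1 \<inter> T2 \<noteq> {}\<close> by auto
  qed
  hence c2: "cnt j1 j2 \<le> 2" using F2 j1 j2 by blast
  have memb: "x \<in> set Tl - T \<Longrightarrow> x = Tl!j \<Longrightarrow> j < 20 \<Longrightarrow> j = j1 \<or> j = j2" for x j
    using Ms j1 j2 Tl_inj by auto
  have "BT \<subseteq> {i. i < length CL \<and> (\<lambda>(c1,c2). (j1 \<in> set c1 \<and> j2 \<in> set c2) \<or> (j2 \<in> set c1 \<and> j1 \<in> set c2)) (CL!i)}"
  proof
    fix i assume iB: "i \<in> BT"
    hence il: "i < 15" unfolding BT_def by auto
    from iB obtain x where x: "x \<in> cl1 i" "x \<notin> T" unfolding BT_def by auto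
    from iB obtain y where y: "y \<in> cl2 i" "y \<notin> T" unfolding BT_def by auto
    obtain jx where jx: "jx \<in> set (fst (CL!i))" "x = Tl!jx" using x unfolding cl1_def by auto
    obtain jy where jy: "jy \<in> set (snd (CL!i))" "y = Tl!jy" using y unfolding cl2_def by auto
    have jxl: "jx < 20" "jy < 20" using K4 il jx jy by auto
    have xs: "x \<in> set Tl - T" "y \<in> set Tl - T" using x y cl_sub[OF il] by auto
    have "jx = j1 \<or> jx = j2" using memb[OF xs(1) jx(2) jxl(1)] .
    moreover have "jy = j1 \<or> jy = j2" using memb[OF xs(2) jy(2) jxl(2)] .
    moreover have "jx \<noteq> jy" using K4 il jx jy by auto
    ultimately show "i \<in> {i. i < length CL \<and> (\<lambda>(c1,c2). (j1 \<in> set c1 \<and> j2 \<in> set c2) \<or> (j2 \<in> set c1 \<and> j1 \<in> set c2)) (CL!i)}"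
      using jx jy il K5 by (cases "CL!i") auto
  qed
  hence "card BT \<le> card {i. i < length CL \<and> (\<lambda>(c1,c2). (j1 \<in> set c1 \<and> j2 \<in> set c2) \<or> (j2 \<in> set c1 \<and> j1 \<in> set c2)) (CL!i)}"
    by (intro card_mono) auto
  also have "\<dots> = cnt j1 j2" unfolding cnt_def by (simp add: length_filter_conv_card)
  finally show False using c2 cBT by linarith
qed



lemma img_ksub:
  assumes "bij_betw g A B"
  shows "(\<lambda>e. g ` e) ` {e. e \<subseteq> A \<and> card e = k} = {e. e \<subseteq> B \<and> card e = k}"
proof
  have inj: "inj_on g A" and im: "g ` A = B" using assms unfolding bij_betw_def by auto
  show "(\<lambda>e. g ` e) ` {e. e \<subseteq> A \<and> card e = k} \<subseteq> {e. e \<subseteq> B \<and> card e = k}"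
  proof
    fix x assume "x \<in> (\<lambda>e. g ` e) ` {e. e \<subseteq> A \<and> card e = k}"
    then obtain e where e: "e \<subseteq> A" "card e = k" "x = g ` e" by auto
    have "card (g ` e) = card e" by (rule card_image[OF inj_on_subset[OF inj e(1)]])
    hence "card x = k" using e by simp
    thus "x \<in> {e. e \<subseteq> B \<and> card e = k}" using e im by auto
  qed
  show "{e. e \<subseteq> B \<and> card e = k} \<subseteq> (\<lambda>e. g ` e) ` {e. e \<subseteq> A \<and> card e = k}"
  proof
    fix x assume x: "x \<in> {e. e \<subseteq> B \<and> card e = k}"
    define e where "e = {a\<in>A. g a \<in> x}"
    have ge: "g ` e = x" using x im unfolding e_def by auto
    have eA: "e \<subseteq> A" unfolding e_def by auto
    have "card (g ` e) = card e" by (rule card_image[OF inj_on_subset[OF inj eA]])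
    hence "card e = k" using x ge by simp
    thus "x \<in> (\<lambda>e. g ` e) ` {e. e \<subseteq> A \<and> card e = k}" using ge unfolding e_def by auto
  qed
qed

lemma setTl: "set Tl = {t. t \<subseteq> {0..<6::nat} \<and> card t = 3}"
proof (rule card_seteq)
  show "finite {t. t \<subseteq> {0..<6::nat} \<and> card t = 3}" by simp
  show "set Tl \<subseteq> {t. t \<subseteq> {0..<6::nat} \<and> card t = 3}" using K7 by auto
  have "card {t. t \<subseteq> {0..<6::nat} \<and> card t = 3} = 20" using n_subsets[of "{0..<6::nat}" 3] K9 by simp
  thus "card {t. t \<subseteq> {0..<6::nat} \<and> card t = 3} \<le> card (set Tl)" using K5 distinct_card[of Tl] by simp
qed

lemma setPl: "set Pl = {t. t \<subseteq> {0..<6::nat} \<and> card t = 2}"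
proof (rule card_seteq)
  show "finite {t. t \<subseteq> {0..<6::nat} \<and> card t = 2}" by simp
  show "set Pl \<subseteq> {t. t \<subseteq> {0..<6::nat} \<and> card t = 2}" using K8 by auto
  have "card {t. t \<subseteq> {0..<6::nat} \<and> card t = 2} = 15" using n_subsets[of "{0..<6::nat}" 2] K9 by simp
  thus "card {t. t \<subseteq> {0..<6::nat} \<and> card t = 2} \<le> card (set Pl)" using K5 distinct_card[of Pl] by simp
qed


lemma B6_alt: "B6_E = {e. e \<subseteq> B6_V \<and> card e = 3} - {{0,1,2},{3,4,5}}"
proof -
  have V: "B6_V = {0,1,2,3,4,5}" unfolding B6_V_def by auto
  have A: "e \<inter> {0,1,2} = {} \<longleftrightarrow> e = {3,4,5}" if "e \<subseteq> B6_V" "card e = 3" for e :: "nat set"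
  proof
    assume "e \<inter> {0,1,2} = {}"
    hence "e \<subseteq> {3,4,5}" using that(1) V by blast
    thus "e = {3,4,5}" using that(2) by (intro card_subset_eq) simp_all
  qed auto
  have B: "e \<inter> {3,4,5} = {} \<longleftrightarrow> e = {0,1,2}" if "e \<subseteq> B6_V" "card e = 3" for e :: "nat set"
  proof
    assume "e \<inter> {3,4,5} = {}"
    hence "e \<subseteq> {0,1,2}" using that(1) V by blast
    thus "e = {0,1,2}" using that(2) by (intro card_subset_eq) simp_all
  qed auto
  show ?thesis
  proof (rule set_eqI)
    fix e :: "nat set"
    show "e \<in> B6_E \<longleftrightarrow> e \<in> {e. e \<subseteq> B6_V \<and> card e = 3} - {{0,1,2},{3,4,5}}"
    proof (cases "e \<subseteq> B6_V \<and> card e = 3")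
      case True
      have a: "e \<inter> {0,1,2} = {} \<longleftrightarrow> e = {3,4,5}" using A[of e] True by blast
      have b: "e \<inter> {3,4,5} = {} \<longleftrightarrow> e = {0,1,2}" using B[of e] True by blast
      have "e \<in> B6_E \<longleftrightarrow> \<not> (e \<inter> {0,1,2} = {}) \<and> \<not> (e \<inter> {3,4,5} = {})" using True unfolding B6_E_def by blast
      also have "\<dots> \<longleftrightarrow> e \<noteq> {3,4,5} \<and> e \<noteq> {0,1,2}" by (simp only: a b)
      finally show ?thesis using True by blast
    next
      case False
      have "e \<notin> B6_E" using False unfolding B6_E_def by (simp only: mem_Collect_eq) blast
      moreover have "e \<notin> {e. e \<subseteq> B6_V \<and> card e = 3} - {{0,1,2},{3,4,5}}" using False by (simp only: Diff_iff mem_Collect_eq) blast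
      ultimately show ?thesis by blast
    qed
  qed
qed


theorem lemma2p3:
  fixes V :: "'a set" and E :: "'a set set" and v :: 'a
  assumes "uniform3 V E"
    and "card V = 7"
    and "\<not> contains_hg V E fano_V fano_E"
    and "v \<in> V"
    and "degree_hg E v \<ge> 11"
    and "card (del_vertex_E E v) \<ge> 18"
  shows "iso_hg (del_vertex_V V v) (del_vertex_E E v) B6_V B6_E"
proof -
  let ?W = "V - {v}"
  have finV: "finite V" using assms(1) unfolding uniform3_def by auto
  have Esub: "e \<subseteq> V \<and> card e = 3" if "e \<in> E" for e using assms(1) that unfolding uniform3_def by auto
  have cW: "card ?W = 6" using assms(2,4) finV by simp
  have finW: "finite ?W" using finV by simp
  obtain f :: "nat \<Rightarrow> 'a" where bf: "bij_betw f {0..<6} ?W" using ex_bij_betw_nat_finite[OF finW] cW by auto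
  have inj: "inj_on f {0..<6}" and imf: "f ` {0..<6} = ?W" using bf unfolding bij_betw_def by auto
  define G where "G = {p \<in> set Pl. insert v (f ` p) \<in> E}"
  define T where "T = {t \<in> set Tl. f ` t \<in> E}"
  have GP: "G \<subseteq> set Pl" and TT: "T \<subseteq> set Tl" unfolding G_def T_def by auto
  have finG: "finite G" and finT: "finite T" using GP TT finite_subset by auto
  have deg: "{e\<in>E. v\<in>e} \<subseteq> (\<lambda>p. insert v (f ` p)) ` G"
  proof
    fix e assume e: "e \<in> {e\<in>E. v\<in>e}"
    hence eE: "e \<in> E" and ve: "v \<in> e" by auto
    have eV: "e \<subseteq> V" and ce: "card e = 3" using Esub[OF eE] by auto
    have fine: "finite e" using ce card.infinite by fastforce
    define p where "p = {i\<in>{0..<6::nat}. f i \<in> e}"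
    have pA: "p \<subseteq> {0..<6}" unfolding p_def by auto
    have fp: "f ` p = e - {v}"
    proof
      show "f ` p \<subseteq> e - {v}" using imf unfolding p_def by auto
      show "e - {v} \<subseteq> f ` p"
      proof
        fix x assume "x \<in> e - {v}"
        hence "x \<in> ?W" using eV by auto
        hence "x \<in> f ` {0..<6}" using imf by simp
        then obtain i where "i \<in> {0..<6}" "x = f i" by blast
        thus "x \<in> f ` p" using \<open>x \<in> e - {v}\<close> unfolding p_def by auto
      qed
    qed
    have "card (f ` p) = card p" by (rule card_image[OF inj_on_subset[OF inj pA]])
    moreover have "card (e - {v}) = 2" using ce ve fine by simp
    ultimately have "card p = 2" using fp by simp
    hence "p \<in> set Pl" using pA setPl by simp
    moreover have "insert v (f ` p) = e" using fp ve by auto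
    ultimately show "e \<in> (\<lambda>p. insert v (f ` p)) ` G" using eE unfolding G_def by auto
  qed
  have "degree_hg E v \<le> card ((\<lambda>p. insert v (f ` p)) ` G)" unfolding degree_hg_def
    by (rule card_mono) (use deg finG in auto)
  also have "\<dots> \<le> card G" by (rule card_image_le[OF finG])
  finally have "11 \<le> card G" using assms(5) by simp
  moreover have "card (set Pl) = 15" using K5 distinct_card[of Pl] by simp
  ultimately have cG: "card (set Pl - G) \<le> 4" using card_Diff_subset[OF finG GP] by simp
  have dl: "del_vertex_E E v \<subseteq> (\<lambda>t. f ` t) ` T"
  proof
    fix e assume e: "e \<in> del_vertex_E E v"
    hence eE: "e \<in> E" and ve: "v \<notin> e" unfolding del_vertex_E_def by auto
    have eV: "e \<subseteq> V" and ce: "card e = 3" using Esub[OF eE] by auto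
    define p where "p = {i\<in>{0..<6::nat}. f i \<in> e}"
    have pA: "p \<subseteq> {0..<6}" unfolding p_def by auto
    have fp: "f ` p = e"
    proof
      show "f ` p \<subseteq> e" unfolding p_def by auto
      show "e \<subseteq> f ` p"
      proof
        fix x assume "x \<in> e"
        hence "x \<in> ?W" using eV ve by auto
        hence "x \<in> f ` {0..<6}" using imf by simp
        then obtain i where "i \<in> {0..<6}" "x = f i" by blast
        thus "x \<in> f ` p" using \<open>x \<in> e\<close> unfolding p_def by auto
      qed
    qed
    have "card (f ` p) = card p" by (rule card_image[OF inj_on_subset[OF inj pA]])
    hence "card p = 3" using fp ce by simp
    hence "p \<in> set Tl" using pA setTl by simp
    thus "e \<in> (\<lambda>t. f ` t) ` T" using eE fp unfolding T_def by auto
  qed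
  have "card (del_vertex_E E v) \<le> card ((\<lambda>t. f ` t) ` T)"
    by (rule card_mono) (use dl finT in auto)
  also have "\<dots> \<le> card T" by (rule card_image_le[OF finT])
  finally have "18 \<le> card T" using assms(6) by simp
  moreover have "card (set Tl) = 20" using K5 distinct_card[of Tl] by simp
  ultimately have cT: "card (set Tl - T) \<le> 2" using card_Diff_subset[OF finT TT] by simp
  from core[OF GP TT cG cT] show ?thesis
  proof (elim disjE exE conjE)
    fix a a' b b' c c'
    assume D: "distinct [a,a',b,b',c,c']" and S: "set [a,a',b,b',c,c'] \<subseteq> {0..<6}"
      and g1: "{a,a'}\<in>G" and g2: "{b,b'}\<in>G" and g3: "{c,c'}\<in>G"
      and t1: "{a',b,c}\<in>T" and t2: "{a',b',c'}\<in>T" and t3: "{a,b,c'}\<in>T" and t4: "{a,b',c}\<in>T"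
    define h where "h = (\<lambda>x::nat. if x=1 then v else if x=2 then f a else if x=3 then f a' else if x=4 then f c
       else if x=5 then f b else if x=6 then f b' else f c')"
    have fV: "{1..7::nat} = {1,2,3,4,5,6,7}" by auto
    have Ssub: "set [a,a',b,b',c,c'] \<subseteq> {0..<6}" by (rule S)
    have fW: "f ` set [a,a',b,b',c,c'] \<subseteq> ?W" using imf S by blast
    have "distinct (map f [a,a',b,b',c,c'])" using D inj_on_subset[OF inj S] by (simp only: distinct_map)
    hence dist: "distinct [v, f a, f a', f b, f b', f c, f c']" using fW by auto
    have injh: "inj_on h {1..7}" unfolding fV inj_on_def h_def using dist by auto
    have imh: "h ` {1..7} \<subseteq> V" unfolding fV h_def using fW assms(4) by auto
    have Gv: "insert v (f ` p) \<in> E" if "p \<in> G" for p using that unfolding G_def by auto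
    have Tv: "f ` t \<in> E" if "t \<in> T" for t using that unfolding T_def by auto
    have e1: "h ` {1,2,3} = insert v (f ` {a,a'})" unfolding h_def by auto
    have e2: "h ` {3,4,5} = f ` {a',b,c}" unfolding h_def by auto
    have e3: "h ` {1,5,6} = insert v (f ` {b,b'})" unfolding h_def by auto
    have e4: "h ` {1,4,7} = insert v (f ` {c,c'})" unfolding h_def by auto
    have e5: "h ` {3,6,7} = f ` {a',b',c'}" unfolding h_def by auto
    have e6: "h ` {2,5,7} = f ` {a,b,c'}" unfolding h_def by auto
    have e7: "h ` {2,4,6} = f ` {a,b',c}" unfolding h_def by auto
    have "\<forall>e\<in>fano_E. h ` e \<in> E"
      unfolding fano_E_def using e1 e2 e3 e4 e5 e6 e7 Gv[OF g1] Gv[OF g2] Gv[OF g3] Tv[OF t1] Tv[OF t2] Tv[OF t3] Tv[OF t4]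
      by (simp only: ball_simps)
    hence "contains_hg V E fano_V fano_E" unfolding contains_hg_def fano_V_def using injh imh by blast
    thus ?thesis using assms(3) by blast
  next
    fix T1 T2
    assume T1: "T1 \<in> set Tl" and T2: "T2 \<in> set Tl" and dj: "T1 \<inter> T2 = {}" and Ms: "set Tl - T = {T1,T2}"
    have Teq: "T = set Tl - {T1,T2}" using TT Ms by blast
    have sTl: "set Tl \<subseteq> Pow {0..<6}" using setTl by blast
    have delE: "del_vertex_E E v = (\<lambda>t. f ` t) ` T"
    proof
      show "del_vertex_E E v \<subseteq> (\<lambda>t. f ` t) ` T" by (rule dl)
      show "(\<lambda>t. f ` t) ` T \<subseteq> del_vertex_E E v"
      proof
        fix x assume "x \<in> (\<lambda>t. f ` t) ` T"
        then obtain t where t: "t \<in> T" "x = f ` t" by blast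
        have "t \<subseteq> {0..<6}" using t(1) TT sTl by blast
        hence "x \<subseteq> ?W" using t(2) imf by blast
        moreover have "x \<in> E" using t unfolding T_def by blast
        ultimately show "x \<in> del_vertex_E E v" unfolding del_vertex_E_def by blast
      qed
    qed
    have injP: "inj_on (\<lambda>t. f ` t) (Pow {0..<6})" by (rule inj_on_image_Pow[OF inj])
    have TrW: "(\<lambda>t. f ` t) ` set Tl = {e. e \<subseteq> ?W \<and> card e = 3}" using img_ksub[OF bf, of 3] setTl by simp
    define X1 where "X1 = f ` T1"
    define X2 where "X2 = f ` T2"
    have T1s: "T1 \<subseteq> {0..<6}" "card T1 = 3" using T1 setTl by auto
    have T2s: "T2 \<subseteq> {0..<6}" "card T2 = 3" using T2 setTl by auto
    have delE2: "del_vertex_E E v = {e. e \<subseteq> ?W \<and> card e = 3} - {X1, X2}"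
    proof -
      have "del_vertex_E E v = (\<lambda>t. f ` t) ` (set Tl - {T1,T2})" using delE Teq by simp
      also have "\<dots> = (\<lambda>t. f ` t) ` set Tl - (\<lambda>t. f ` t) ` {T1,T2}"
        by (rule inj_on_image_set_diff[OF injP]) (use sTl T1s T2s in auto)
      finally show ?thesis using TrW unfolding X1_def X2_def by simp
    qed
    have U: "T1 \<union> T2 = {0..<6}"
    proof (rule card_subset_eq)
      show "T1 \<union> T2 \<subseteq> {0..<6}" using T1s T2s by blast
      have "card (T1 \<union> T2) = 6" using card_Un_disjoint[of T1 T2] T1s T2s dj finite_subset by fastforce
      thus "card (T1 \<union> T2) = card {0..<6::nat}" by simp
    qed simp
    have XU: "X1 \<union> X2 = ?W" unfolding X1_def X2_def using U imf by (metis image_Un)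
    have XI: "X1 \<inter> X2 = {}" unfolding X1_def X2_def using inj_on_image_Int[OF inj T1s(1) T2s(1)] dj by simp
    have cX1: "card X1 = 3" unfolding X1_def using card_image[OF inj_on_subset[OF inj T1s(1)]] T1s by simp
    have cX2: "card X2 = 3" unfolding X2_def using card_image[OF inj_on_subset[OF inj T2s(1)]] T2s by simp
    have finX: "finite X1" "finite X2" using cX1 cX2 card.infinite by fastforce+
    obtain s1 :: "'a \<Rightarrow> nat" where s1: "bij_betw s1 X1 {0,1,2}"
      using finite_same_card_bij[OF finX(1), of "{0,1,2::nat}"] cX1 by auto
    obtain s2 :: "'a \<Rightarrow> nat" where s2: "bij_betw s2 X2 {3,4,5}"
      using finite_same_card_bij[OF finX(2), of "{3,4,5::nat}"] cX2 by auto
    define g where "g = (\<lambda>x. if x \<in> X1 then s1 x else s2 x)"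
    have g1: "bij_betw g X1 {0,1,2}" using s1 bij_betw_cong[of X1 g s1 "{0,1,2}"] unfolding g_def by simp
    have "g a = s2 a" if "a \<in> X2" for a using that XI unfolding g_def by auto
    hence g2: "bij_betw g X2 {3,4,5}" using s2 bij_betw_cong[of X2 g s2 "{3,4,5}"] by simp
    have "bij_betw g (X1 \<union> X2) ({0,1,2} \<union> {3,4,5})" by (rule bij_betw_combine[OF g1 g2]) simp
    moreover have "{0,1,2} \<union> {3,4,5} = B6_V" unfolding B6_V_def by auto
    ultimately have bg: "bij_betw g ?W B6_V" using XU by simp
    have gX1: "g ` X1 = {0,1,2}" using g1 unfolding bij_betw_def by (elim conjE)
    have gX2: "g ` X2 = {3,4,5}" using g2 unfolding bij_betw_def by (elim conjE)
    have injg: "inj_on g ?W" using bg unfolding bij_betw_def by (elim conjE)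
    have XW: "X1 \<subseteq> ?W" "X2 \<subseteq> ?W" using XU by auto
    have "(\<lambda>e. g ` e) ` del_vertex_E E v = (\<lambda>e. g ` e) ` {e. e \<subseteq> ?W \<and> card e = 3} - (\<lambda>e. g ` e) ` {X1, X2}"
      unfolding delE2 by (rule inj_on_image_set_diff[OF inj_on_image_Pow[OF injg]]) (use XW in auto)
    also have "\<dots> = {e. e \<subseteq> B6_V \<and> card e = 3} - {{0,1,2},{3,4,5}}"
      using img_ksub[OF bg, of 3] gX1 gX2 by simp
    also have "\<dots> = B6_E" using B6_alt by simp
    finally have "(\<lambda>e. g ` e) ` del_vertex_E E v = B6_E" .
    thus ?thesis unfolding iso_hg_def del_vertex_V_def using bg by blast
  qed
qed

end
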